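(* For every $m\in\mathbb{N}$, $\eta^{m\text{-}mult}_{(2,2)}(\ell_2;c_0)=\frac m2$, where $\eta^{m\text{-}mult}_{(2,2)}(\ell_2;c_0)$ means $\eta^{m\text{-}mult}_{(2,2)}(\ell_2,\dots,\ell_2;c_0)$ with $m$ copies of $\ell_2$.
   Context: For vectors $x_1,\dots,x_n$ in a Banach space $E$ and $q>0$, $\|(x_k)_{k=1}^n\|_{w,q}:=\sup_{\varphi\in B_{E^*}}\left(\sum_{k=1}^n|\varphi(x_k)|^q\right)^{1/q}$, where $B_{E^*}$ is the closed unit ball of the dual. $\mathcal{L}(E_1,\dots,E_m;F)$ is the space of bounded $m$-linear maps. For $p,q>0$, the multilinear $m$-index of $(p,q)$-summability $\eta^{m\text{-}mult}_{(p,q)}(E_1,\dots,E_m;F)$ is the infimum of all real numbers $s$ with the property: for every $T\in\mathcal{L}(E_1,\dots,E_m;F)$ there is a constant $C\ge0$ (depending only on $m$ and $T$) such that $$\left(\sum_{k_1,\dots,k_m=1}^n\|T(x^{(1)}_{k_1},\dots,x^{(m)}_{k_m})\|^p\right)^{1/p}\le C n^{s}\prod_{i=1}^m\|(x^{(i)}_{k})_{k=1}^n\|_{w,q}$$ for all positive integers $n$ and all $x^{(i)}_k\in E_i$, $1\le k\le n$, $1\le i\le m$. *)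

theory Defs
  imports "HOL-Analysis.Analysis"
begin

definition l2 :: "(nat \<Rightarrow> real) set" where
  "l2 = {x. summable (\<lambda>j. (x j)\<^sup>2)}"

definition l2_norm :: "(nat \<Rightarrow> real) \<Rightarrow> real" where
  "l2_norm x = sqrt (\<Sum>j. (x j)\<^sup>2)"

definition c0 :: "(nat \<Rightarrow> real) set" where
  "c0 = {x. x \<longlonglongrightarrow> 0}"

definition c0_norm :: "(nat \<Rightarrow> real) \<Rightarrow> real" where
  "c0_norm x = (SUP j. \<bar>x j\<bar>)"

definition linear_on :: "(nat \<Rightarrow> real) set \<Rightarrow> ((nat \<Rightarrow> real) \<Rightarrow> real) \<Rightarrow> bool" where
  "linear_on E f \<longleftrightarrow>
     (\<forall>x\<in>E. \<forall>y\<in>E. f (\<lambda>j. x j + y j) = f x + f y) \<and> (\<forall>x\<in>E. \<forall>a::real. f (\<lambda>j. a * x j) = a * f x)"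

definition dual_ball :: "(nat \<Rightarrow> real) set \<Rightarrow> ((nat \<Rightarrow> real) \<Rightarrow> real) \<Rightarrow> ((nat \<Rightarrow> real) \<Rightarrow> real) set" where
  "dual_ball E N = {\<phi>. linear_on E \<phi> \<and> (\<forall>x\<in>E. \<bar>\<phi> x\<bar> \<le> N x)}"

text \<open>Weak q-norm of the finite family x_0, ..., x_(n-1) (indices shifted to start at 0).\<close>
definition weak_norm :: "(nat \<Rightarrow> real) set \<Rightarrow> ((nat \<Rightarrow> real) \<Rightarrow> real) \<Rightarrow> real \<Rightarrow> nat \<Rightarrow> (nat \<Rightarrow> nat \<Rightarrow> real) \<Rightarrow> real" where
  "weak_norm E N q n x = (SUP \<phi> \<in> dual_ball E N. (\<Sum>k<n. \<bar>\<phi> (x k)\<bar> powr q) powr (1/q))"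

definition tuples :: "nat \<Rightarrow> (nat \<Rightarrow> real) set \<Rightarrow> (nat \<Rightarrow> (nat \<Rightarrow> real)) set" where
  "tuples m E = {xs. (\<forall>i<m. xs i \<in> E) \<and> (\<forall>i\<ge>m. xs i = (\<lambda>_. 0))}"

text \<open>Linearity of a sequence-valued map is checked coordinatewise (vector operations are pointwise).
Bounded m-linear maps E x ... x E -> F (m copies of E).\<close>
definition bounded_mlinear ::
  "nat \<Rightarrow> (nat \<Rightarrow> real) set \<Rightarrow> ((nat \<Rightarrow> real) \<Rightarrow> real) \<Rightarrow> (nat \<Rightarrow> real) set \<Rightarrow> ((nat \<Rightarrow> real) \<Rightarrow> real)
     \<Rightarrow> ((nat \<Rightarrow> (nat \<Rightarrow> real)) \<Rightarrow> (nat \<Rightarrow> real)) \<Rightarrow> bool" where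
  "bounded_mlinear m E NE F NF T \<longleftrightarrow>
     (\<forall>xs\<in>tuples m E. T xs \<in> F) \<and>
     (\<forall>i<m. \<forall>xs\<in>tuples m E. (\<forall>j. linear_on E (\<lambda>y. T (xs(i := y)) j))) \<and>
     (\<exists>C. \<forall>xs\<in>tuples m E. NF (T xs) \<le> C * (\<Prod>i<m. NE (xs i)))"

definition eta_mult ::
  "nat \<Rightarrow> real \<Rightarrow> real \<Rightarrow> (nat \<Rightarrow> real) set \<Rightarrow> ((nat \<Rightarrow> real) \<Rightarrow> real) \<Rightarrow> (nat \<Rightarrow> real) set
     \<Rightarrow> ((nat \<Rightarrow> real) \<Rightarrow> real) \<Rightarrow> real" where
  "eta_mult m p q E NE F NF = Inf {s::real.
     \<forall>T. bounded_mlinear m E NE F NF T \<longrightarrow>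
       (\<exists>C\<ge>0. \<forall>n::nat. n \<ge> 1 \<longrightarrow>
          (\<forall>x :: nat \<Rightarrow> nat \<Rightarrow> nat \<Rightarrow> real. (\<forall>i<m. \<forall>k<n. x i k \<in> E) \<longrightarrow>
             (\<Sum>k\<in>PiE {..<m} (\<lambda>_. {..<n}). NF (T (\<lambda>i. if i < m then x i (k i) else (\<lambda>_. 0))) powr p) powr (1/p)
               \<le> C * real n powr s * (\<Prod>i<m. weak_norm E NE q n (x i))))}"

end

theory Submission
  imports Defs "HOL-Library.Nat_Bijection"
begin

lemma l2_summable: "x \<in> l2 \<Longrightarrow> summable (\<lambda>j. (x j)\<^sup>2)"
  by (simp add: l2_def)

lemma l2_suminf_nonneg: "x \<in> l2 \<Longrightarrow> 0 \<le> (\<Sum>j. (x j)\<^sup>2)"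
  by (rule suminf_nonneg) (auto simp: l2_def)

lemma l2_norm_nonneg: "x \<in> l2 \<Longrightarrow> 0 \<le> l2_norm x"
  using l2_suminf_nonneg by (simp add: l2_norm_def)

lemma l2_norm_sq: "x \<in> l2 \<Longrightarrow> (l2_norm x)\<^sup>2 = (\<Sum>j. (x j)\<^sup>2)"
  using l2_suminf_nonneg by (simp add: l2_norm_def)

lemma abs_le_l2_norm: assumes "x \<in> l2" shows "\<bar>x j\<bar> \<le> l2_norm x"
proof -
  have "(\<Sum>t\<in>{j}. (x t)\<^sup>2) \<le> (\<Sum>t. (x t)\<^sup>2)"
    by (rule sum_le_suminf) (use assms in \<open>auto simp: l2_def\<close>)
  then have "(x j)\<^sup>2 \<le> (\<Sum>t. (x t)\<^sup>2)" by simp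
  then show ?thesis unfolding l2_norm_def using real_le_rsqrt real_sqrt_abs
    by (metis real_sqrt_le_mono)
qed

lemma l2_finite:
  assumes "\<And>t. t \<ge> n \<Longrightarrow> x t = 0"
  shows "x \<in> l2" "l2_norm x = sqrt (\<Sum>t<n. (x t)\<^sup>2)"
proof -
  have s: "(\<lambda>j. (x j)\<^sup>2) sums (\<Sum>t<n. (x t)\<^sup>2)"
    by (rule sums_finite) (use assms in auto)
  then show "x \<in> l2" by (auto simp: l2_def sums_summable)
  show "l2_norm x = sqrt (\<Sum>t<n. (x t)\<^sup>2)" using s by (simp add: l2_norm_def sums_unique[symmetric])
qed

lemma l2_add: assumes "x \<in> l2" "y \<in> l2" shows "(\<lambda>j. x j + y j) \<in> l2"
proof -
  have "summable (\<lambda>j. 2 * (x j)\<^sup>2 + 2 * (y j)\<^sup>2)"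
    using assms by (intro summable_add summable_mult) (auto simp: l2_def)
  moreover have "norm ((x j + y j)\<^sup>2) \<le> 2 * (x j)\<^sup>2 + 2 * (y j)\<^sup>2" for j
  proof -
    have a: "0 \<le> (x j)\<^sup>2 + (y j)\<^sup>2 - 2 * x j * y j" by (metis zero_le_power2 power2_diff)
    have b: "norm ((x j + y j)\<^sup>2) = (x j)\<^sup>2 + (y j)\<^sup>2 + 2 * x j * y j" 
    proof -
      have b0: "norm ((x j + y j)\<^sup>2) = (x j + y j)\<^sup>2" by simp
      show ?thesis unfolding b0 by (rule power2_sum)
    qed
    show ?thesis using a b by linarith
  qed
  ultimately show ?thesis unfolding l2_def by (auto intro: summable_comparison_test')
qed

lemma l2_scale: assumes "x \<in> l2" shows "(\<lambda>j. a * x j) \<in> l2"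
  using summable_mult[OF l2_summable[OF assms], of "a\<^sup>2"]
  by (simp add: l2_def power_mult_distrib)

lemma c0_bdd: assumes "x \<in> c0" shows "bdd_above (range (\<lambda>j. \<bar>x j\<bar>))"
proof -
  have "Bseq x" using assms by (auto simp: c0_def intro: convergent_imp_Bseq convergentI)
  then obtain K where "\<And>j. norm (x j) \<le> K" by (auto simp: Bseq_def)
  then show ?thesis by (intro bdd_aboveI2[where M=K]) auto
qed

lemma c0_norm_ge: "x \<in> c0 \<Longrightarrow> \<bar>x j\<bar> \<le> c0_norm x"
  unfolding c0_norm_def by (rule cSUP_upper[OF _ c0_bdd]) auto

lemma c0_norm_nonneg: "x \<in> c0 \<Longrightarrow> 0 \<le> c0_norm x"
  using c0_norm_ge[of x 0] by linarith

lemma cs_pointwise: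
  fixes a b u w :: real assumes "a > 0" "b > 0"
  shows "\<bar>u * w\<bar> \<le> (b / (2*a)) * u\<^sup>2 + (a / (2*b)) * w\<^sup>2"
proof -
  have "0 \<le> (b * \<bar>u\<bar> - a * \<bar>w\<bar>)\<^sup>2" by simp
  then have "2*a*b*\<bar>u * w\<bar> \<le> b\<^sup>2 * u\<^sup>2 + a\<^sup>2 * w\<^sup>2"
    by (simp add: power2_eq_square algebra_simps abs_mult)
  then show ?thesis using assms
    by (simp add: field_simps power2_eq_square)
qed

lemma cs_l2:
  assumes x: "x \<in> l2" and v: "v \<in> l2"
  shows "summable (\<lambda>j. \<bar>x j * v j\<bar>)" "summable (\<lambda>j. x j * v j)"
    "\<bar>\<Sum>j. x j * v j\<bar> \<le> l2_norm x * l2_norm v"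
proof -
  have sx: "summable (\<lambda>j. (x j)\<^sup>2)" and sv: "summable (\<lambda>j. (v j)\<^sup>2)" using x v by (auto simp: l2_def)
  have "summable (\<lambda>j. (x j)\<^sup>2 + (v j)\<^sup>2)" using sx sv by (rule summable_add)
  moreover have "norm \<bar>x j * v j\<bar> \<le> (x j)\<^sup>2 + (v j)\<^sup>2" for j
    using cs_pointwise[of 1 1 "x j" "v j"] by simp
  ultimately show a: "summable (\<lambda>j. \<bar>x j * v j\<bar>)" by (rule summable_comparison_test')
  then show "summable (\<lambda>j. x j * v j)" by (rule summable_rabs_cancel)
  show "\<bar>\<Sum>j. x j * v j\<bar> \<le> l2_norm x * l2_norm v"
  proof (cases "l2_norm x = 0 \<or> l2_norm v = 0")
    case True
    then have "(\<Sum>j. (x j)\<^sup>2) = 0 \<or> (\<Sum>j. (v j)\<^sup>2) = 0"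
      using l2_suminf_nonneg[OF x] l2_suminf_nonneg[OF v] by (auto simp: l2_norm_def)
    then have "(\<forall>j. x j = 0) \<or> (\<forall>j. v j = 0)"
      using suminf_eq_zero_iff[OF sx] suminf_eq_zero_iff[OF sv] by auto
    then show ?thesis using l2_norm_nonneg[OF x] l2_norm_nonneg[OF v] by auto
  next
    case False
    define A where "A = l2_norm x" define B where "B = l2_norm v"
    have A: "A > 0" and B: "B > 0" using False l2_norm_nonneg[OF x] l2_norm_nonneg[OF v]
      by (auto simp: A_def B_def)
    have "\<bar>\<Sum>j. x j * v j\<bar> \<le> (\<Sum>j. \<bar>x j * v j\<bar>)" by (rule summable_rabs[OF a])
    also have "\<dots> \<le> (\<Sum>j. (B / (2*A)) * (x j)\<^sup>2 + (A / (2*B)) * (v j)\<^sup>2)"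
      by (rule suminf_le) (use cs_pointwise[OF A B] a sx sv in \<open>auto intro!: summable_add summable_mult\<close>)
    also have "\<dots> = (\<Sum>j. (B / (2*A)) * (x j)\<^sup>2) + (\<Sum>j. (A / (2*B)) * (v j)\<^sup>2)"
      using sx sv by (intro suminf_add[symmetric] summable_mult)
    also have "\<dots> = (B / (2*A)) * (\<Sum>j. (x j)\<^sup>2) + (A / (2*B)) * (\<Sum>j. (v j)\<^sup>2)"
      using sx sv by (simp only: suminf_mult)
    also have "\<dots> = (B / (2*A)) * A\<^sup>2 + (A / (2*B)) * B\<^sup>2"
      using l2_norm_sq[OF x] l2_norm_sq[OF v] by (simp add: A_def B_def)
    also have "\<dots> = A * B" using A B by (simp add: field_simps power2_eq_square)
    finally show ?thesis by (simp add: A_def B_def)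
  qed
qed


lemma abs_powr2: "\<bar>z::real\<bar> powr 2 = z\<^sup>2"
  by (cases "z = 0") (auto simp: powr_numeral)

definition ipf :: "(nat\<Rightarrow>real) \<Rightarrow> (nat\<Rightarrow>real) \<Rightarrow> real" where
  "ipf v y = (\<Sum>j. y j * v j) / l2_norm v"

lemma dual_bound: "\<phi> \<in> dual_ball l2 l2_norm \<Longrightarrow> y \<in> l2 \<Longrightarrow> \<bar>\<phi> y\<bar> \<le> l2_norm y"
  by (auto simp: dual_ball_def)

lemma zero_dual: "(\<lambda>_. 0) \<in> dual_ball l2 l2_norm"
  by (auto simp: dual_ball_def linear_on_def l2_norm_nonneg)

lemma ipf_dual:
  assumes v: "v \<in> l2" and p: "l2_norm v > 0"
  shows "ipf v \<in> dual_ball l2 l2_norm"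
  unfolding dual_ball_def linear_on_def
proof (intro CollectI conjI ballI allI)
  fix x y assume x: "x \<in> l2" and y: "y \<in> l2"
  have "(\<Sum>j. (x j + y j) * v j) = (\<Sum>j. x j * v j + y j * v j)" by (simp add: algebra_simps)
  also have "\<dots> = (\<Sum>j. x j * v j) + (\<Sum>j. y j * v j)"
    using cs_l2(2)[OF x v] cs_l2(2)[OF y v] by (rule suminf_add[symmetric])
  finally show "ipf v (\<lambda>j. x j + y j) = ipf v x + ipf v y" by (simp add: ipf_def add_divide_distrib)
next
  fix x a assume x: "x \<in> l2"
  have "(\<Sum>j. (a * x j) * v j) = (\<Sum>j. a * (x j * v j))" by (simp add: algebra_simps)
  also have "\<dots> = a * (\<Sum>j. x j * v j)" using cs_l2(2)[OF x v] by (rule suminf_mult)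
  finally show "ipf v (\<lambda>j. a * x j) = a * ipf v x" by (simp add: ipf_def)
next
  fix x assume x: "x \<in> l2"
  have "\<bar>\<Sum>j. x j * v j\<bar> \<le> l2_norm x * l2_norm v" by (rule cs_l2(3)[OF x v])
  then show "\<bar>ipf v x\<bar> \<le> l2_norm x" using p by (simp add: ipf_def field_simps)
qed

lemma ipf_self: assumes v: "v \<in> l2" and p: "l2_norm v > 0" shows "ipf v v = l2_norm v"
proof -
  have "(\<Sum>j. v j * v j) = (l2_norm v)\<^sup>2" using l2_norm_sq[OF v] by (simp add: power2_eq_square)
  then show ?thesis using p by (simp add: ipf_def power2_eq_square)
qed

lemma wn_bdd:
  assumes "\<forall>k<n. x k \<in> l2"
  shows "bdd_above ((\<lambda>\<phi>. (\<Sum>k<n. \<bar>\<phi> (x k)\<bar> powr 2) powr (1/2)) ` dual_ball l2 l2_norm)"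
proof (rule bdd_aboveI2)
  fix \<phi> assume \<phi>: "\<phi> \<in> dual_ball l2 l2_norm"
  have "(\<Sum>k<n. \<bar>\<phi> (x k)\<bar> powr 2) \<le> (\<Sum>k<n. (l2_norm (x k)) powr 2)"
    using assms dual_bound[OF \<phi>] by (intro sum_mono powr_mono2) auto
  then show "(\<Sum>k<n. \<bar>\<phi> (x k)\<bar> powr 2) powr (1/2) \<le> (\<Sum>k<n. (l2_norm (x k)) powr 2) powr (1/2)"
    by (intro powr_mono2) (auto intro: sum_nonneg)
qed

lemma wn_nonneg:
  assumes "\<forall>k<n. x k \<in> l2"
  shows "0 \<le> weak_norm l2 l2_norm 2 n x"
proof -
  have "(\<Sum>k<n. \<bar>(\<lambda>_. 0::real) (x k)\<bar> powr 2) powr (1/2) \<le> weak_norm l2 l2_norm 2 n x"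
    unfolding weak_norm_def using wn_bdd[OF assms] zero_dual
    by (intro cSUP_upper) auto
  then show ?thesis by simp
qed

lemma wn_ge:
  assumes "\<forall>k<n. x k \<in> l2" "k < n"
  shows "l2_norm (x k) \<le> weak_norm l2 l2_norm 2 n x"
proof (cases "l2_norm (x k) = 0")
  case True then show ?thesis using wn_nonneg[OF assms(1)] by simp
next
  case False
  have xk: "x k \<in> l2" using assms by auto
  then have p: "l2_norm (x k) > 0" using False l2_norm_nonneg by force
  let ?\<phi> = "ipf (x k)"
  have "l2_norm (x k) = (\<bar>?\<phi> (x k)\<bar> powr 2) powr (1/2)"
    using ipf_self[OF xk p] p by (simp add: abs_powr2 powr_half_sqrt)
  also have "\<dots> \<le> (\<Sum>k<n. \<bar>?\<phi> (x k)\<bar> powr 2) powr (1/2)"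
    using assms(2) by (intro powr_mono2 member_le_sum[where f = "\<lambda>k. \<bar>?\<phi> (x k)\<bar> powr 2"]) auto
  also have "\<dots> \<le> weak_norm l2 l2_norm 2 n x"
    unfolding weak_norm_def using wn_bdd[OF assms(1)] ipf_dual[OF xk p]
    by (intro cSUP_upper) auto
  finally show ?thesis .
qed

definition ee :: "nat \<Rightarrow> nat \<Rightarrow> real" where "ee k = (\<lambda>t. if t = k then 1 else 0)"

lemma ee_l2: "ee k \<in> l2"
  by (rule l2_finite(1)[of "Suc k"]) (auto simp: ee_def)

lemma trunc_l2: "(\<lambda>t. if t < N then a t else 0) \<in> l2"
  by (rule l2_finite(1)[of N]) auto

lemma dual_lin_sum:
  assumes \<phi>: "\<phi> \<in> dual_ball l2 l2_norm"
  shows "\<phi> (\<lambda>t. if t < N then a t else 0) = (\<Sum>k<N. a k * \<phi> (ee k))"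
proof (induction N)
  case 0
  have lin: "linear_on l2 \<phi>" using \<phi> by (simp add: dual_ball_def)
  have z: "(\<lambda>t::nat. 0::real) \<in> l2" using trunc_l2[of 0] by simp
  have "\<forall>x\<in>l2. \<forall>a. \<phi> (\<lambda>j. a * x j) = a * \<phi> x" using lin unfolding linear_on_def by blast
  from spec[OF bspec[OF this z], of 0] show ?case by simp
next
  case (Suc N)
  have lin: "linear_on l2 \<phi>" using \<phi> by (simp add: dual_ball_def)
  have e: "(\<lambda>t. if t < Suc N then a t else 0) =
    (\<lambda>j. (\<lambda>t. if t < N then a t else 0) j + (\<lambda>j. a N * ee N j) j)"
    by (auto simp: ee_def less_Suc_eq)
  have "\<phi> (\<lambda>j. (\<lambda>t. if t < N then a t else 0) j + (\<lambda>j. a N * ee N j) j)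
     = \<phi> (\<lambda>t. if t < N then a t else 0) + \<phi> (\<lambda>j. a N * ee N j)"
  proof -
    have A: "\<forall>x\<in>l2. \<forall>y\<in>l2. \<phi> (\<lambda>j. x j + y j) = \<phi> x + \<phi> y" using lin unfolding linear_on_def by blast
    show ?thesis using bspec[OF bspec[OF A trunc_l2[of N a]] l2_scale[OF ee_l2, of "a N" N]] by simp
  qed
  moreover have "\<phi> (\<lambda>j. a N * ee N j) = a N * \<phi> (ee N)"
  proof -
    have B: "\<forall>x\<in>l2. \<forall>a. \<phi> (\<lambda>j. a * x j) = a * \<phi> x" using lin unfolding linear_on_def by blast
    show ?thesis using spec[OF bspec[OF B ee_l2[of N]], of "a N"] by simp
  qed
  ultimately show ?case using Suc e by simp
qed

lemma wn_ee: "weak_norm l2 l2_norm 2 n (\<lambda>k. ee k) \<le> 1"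
  unfolding weak_norm_def
proof (rule cSUP_least)
  show "dual_ball l2 l2_norm \<noteq> {}" using zero_dual by auto
next
  fix \<phi> assume \<phi>: "\<phi> \<in> dual_ball l2 l2_norm"
  define S where "S = (\<Sum>k<n. (\<phi> (ee k))\<^sup>2)"
  have S0: "0 \<le> S" by (simp add: S_def sum_nonneg)
  have "S = \<phi> (\<lambda>t. if t < n then \<phi> (ee t) else 0)"
    using dual_lin_sum[OF \<phi>] by (simp add: S_def power2_eq_square)
  also have "\<dots> \<le> l2_norm (\<lambda>t. if t < n then \<phi> (ee t) else 0)"
    using dual_bound[OF \<phi> trunc_l2[of n "\<lambda>t. \<phi> (ee t)"]] by linarith
  also have "\<dots> = sqrt S"
    by (subst l2_finite(2)[of n]) (auto simp: S_def)
  finally have "S \<le> sqrt S" .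
  then have "S\<^sup>2 \<le> (sqrt S)\<^sup>2" using S0 by (rule power_mono)
  then have SS: "S * S \<le> S" using S0 by (simp add: power2_eq_square)
  have "S \<le> 1"
  proof (rule ccontr)
    assume "\<not> S \<le> 1"
    then have "S * 1 < S * S" by (intro mult_strict_left_mono) auto
    then show False using SS by simp
  qed
  then show "(\<Sum>k<n. \<bar>\<phi> (ee k)\<bar> powr 2) powr (1/2) \<le> 1"
    using S0 by (simp add: abs_powr2 powr_half_sqrt S_def[symmetric])
qed


lemma upper_bound:
  assumes T: "bounded_mlinear m l2 l2_norm c0 c0_norm T"
  shows "\<exists>C\<ge>0. \<forall>n::nat. n \<ge> 1 \<longrightarrow>
          (\<forall>x :: nat \<Rightarrow> nat \<Rightarrow> nat \<Rightarrow> real. (\<forall>i<m. \<forall>k<n. x i k \<in> l2) \<longrightarrow>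
             (\<Sum>k\<in>PiE {..<m} (\<lambda>_. {..<n}). c0_norm (T (\<lambda>i. if i < m then x i (k i) else (\<lambda>_. 0))) powr 2) powr (1/2)
               \<le> C * real n powr (real m / 2) * (\<Prod>i<m. weak_norm l2 l2_norm 2 n (x i)))"
proof -
  from T obtain C0 where C0: "\<forall>xs\<in>tuples m l2. c0_norm (T xs) \<le> C0 * (\<Prod>i<m. l2_norm (xs i))"
    and Tc: "\<forall>xs\<in>tuples m l2. T xs \<in> c0"
    unfolding bounded_mlinear_def by blast
  define C where "C = max C0 0"
  show ?thesis
  proof (intro exI[of _ C] conjI allI impI)
    show "0 \<le> C" by (simp add: C_def)
    fix n :: nat and x :: "nat \<Rightarrow> nat \<Rightarrow> nat \<Rightarrow> real"
    assume n: "n \<ge> 1" and hx: "\<forall>i<m. \<forall>k<n. x i k \<in> l2"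
    define W where "W = (\<Prod>i<m. weak_norm l2 l2_norm 2 n (x i))"
    have W0: "0 \<le> W" unfolding W_def using hx by (intro prod_nonneg wn_nonneg) auto
    have bound: "c0_norm (T (\<lambda>i. if i < m then x i (k i) else (\<lambda>_. 0))) powr 2 \<le> (C * W)\<^sup>2"
      if k: "k \<in> PiE {..<m} (\<lambda>_. {..<n})" for k
    proof -
      define xs where "xs = (\<lambda>i. if i < m then x i (k i) else (\<lambda>_. 0::real))"
      have kin: "i < m \<Longrightarrow> k i < n" for i using k by auto
      have xsl2: "i < m \<Longrightarrow> xs i \<in> l2" for i using hx kin by (auto simp: xs_def)
      have xs: "xs \<in> tuples m l2" using xsl2 by (auto simp: tuples_def xs_def)
      have NF0: "0 \<le> c0_norm (T xs)" using Tc xs c0_norm_nonneg by blast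
      have P0: "0 \<le> (\<Prod>i<m. l2_norm (xs i))" using xsl2 by (intro prod_nonneg l2_norm_nonneg) auto
      have "c0_norm (T xs) \<le> C0 * (\<Prod>i<m. l2_norm (xs i))" using C0 xs by blast
      also have "\<dots> \<le> C * (\<Prod>i<m. l2_norm (xs i))" using P0 by (intro mult_right_mono) (auto simp: C_def)
      also have "\<dots> \<le> C * W" unfolding W_def
      proof (intro mult_left_mono prod_mono conjI)
        fix i assume "i \<in> {..<m}"
        then have i: "i < m" by simp
        show "0 \<le> l2_norm (xs i)" using xsl2[OF i] by (rule l2_norm_nonneg)
        show "l2_norm (xs i) \<le> weak_norm l2 l2_norm 2 n (x i)"
          using wn_ge[of n "x i" "k i"] hx i kin[OF i] by (auto simp: xs_def)
      qed (simp add: C_def)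
      finally have "c0_norm (T xs) \<le> C * W" .
      then have "(c0_norm (T xs))\<^sup>2 \<le> (C * W)\<^sup>2" using NF0 by (rule power_mono)
      then show ?thesis using NF0 abs_powr2[of "c0_norm (T xs)"] by (simp add: xs_def)
    qed
    have card: "card (PiE {..<m} (\<lambda>_. {..<n})) = n ^ m" by (simp add: card_PiE)
    have "(\<Sum>k\<in>PiE {..<m} (\<lambda>_. {..<n}). c0_norm (T (\<lambda>i. if i < m then x i (k i) else (\<lambda>_. 0))) powr 2)
        \<le> (\<Sum>k\<in>PiE {..<m} (\<lambda>_. {..<n}). (C * W)\<^sup>2)" using bound by (rule sum_mono)
    also have "\<dots> = real n ^ m * (C * W)\<^sup>2" using card by simp
    finally have S: "(\<Sum>k\<in>PiE {..<m} (\<lambda>_. {..<n}). c0_norm (T (\<lambda>i. if i < m then x i (k i) else (\<lambda>_. 0))) powr 2)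
        \<le> real n ^ m * (C * W)\<^sup>2" .
    have "(\<Sum>k\<in>PiE {..<m} (\<lambda>_. {..<n}). c0_norm (T (\<lambda>i. if i < m then x i (k i) else (\<lambda>_. 0))) powr 2) powr (1/2)
        \<le> (real n ^ m * (C * W)\<^sup>2) powr (1/2)"
      using S by (intro powr_mono2) (auto intro: sum_nonneg)
    also have "\<dots> = sqrt (real n ^ m) * (C * W)"
      using W0 \<open>0 \<le> C\<close> by (simp add: powr_half_sqrt real_sqrt_mult)
    also have "sqrt (real n ^ m) = real n powr (real m / 2)"
      using n by (simp add: powr_half_sqrt_powr powr_realpow)
    finally show "(\<Sum>k\<in>PiE {..<m} (\<lambda>_. {..<n}). c0_norm (T (\<lambda>i. if i < m then x i (k i) else (\<lambda>_. 0))) powr 2) powr (1/2)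
               \<le> C * real n powr (real m / 2) * (\<Prod>i<m. weak_norm l2 l2_norm 2 n (x i))"
      by (simp add: W_def algebra_simps)
  qed
qed


definition Tm :: "nat \<Rightarrow> (nat \<Rightarrow> nat \<Rightarrow> real) \<Rightarrow> nat \<Rightarrow> real" where
  "Tm m xs j = (if length (list_decode j) = m then \<Prod>i<m. xs i (list_decode j ! i) else 0)"

lemma list_decode_bound: "x \<in> set (list_decode j) \<Longrightarrow> x < j"
proof (induction j arbitrary: x rule: list_decode.induct)
  case 1 then show ?case by simp
next
  case (2 n)
  obtain a b where ab: "prod_decode n = (a, b)" by (cases "prod_decode n")
  have n: "n = prod_encode (a, b)" by (metis ab prod_decode_inverse)
  have "a \<le> n" "b \<le> n" using n le_prod_encode_1 le_prod_encode_2 by auto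
  have IH: "\<And>y. y \<in> set (list_decode b) \<Longrightarrow> y < b" using 2(1) ab by auto
  from 2(2) ab have "x = a \<or> x \<in> set (list_decode b)" by simp
  then show ?case using IH \<open>a \<le> n\<close> \<open>b \<le> n\<close> by fastforce
qed

lemma Tm_partial:
  assumes xs: "\<forall>i<m. xs i \<in> l2"
  shows "(\<Sum>j<N. (Tm m xs j)\<^sup>2) \<le> (\<Prod>i<m. \<Sum>t. (xs i t)\<^sup>2)"
proof -
  define J where "J = {j\<in>{..<N}. length (list_decode j) = m}"
  define h where "h j = restrict (\<lambda>i. list_decode j ! i) {..<m}" for j
  define g where "g t = (\<Prod>i<m. (xs i (t i))\<^sup>2)" for t :: "nat \<Rightarrow> nat"
  have "(\<Sum>j<N. (Tm m xs j)\<^sup>2) = (\<Sum>j\<in>J. (Tm m xs j)\<^sup>2)"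
    unfolding J_def by (subst sum.inter_filter) (auto simp: Tm_def intro!: sum.cong)
  also have "\<dots> = (\<Sum>j\<in>J. g (h j))"
    by (intro sum.cong) (auto simp: J_def Tm_def g_def h_def prod_power_distrib)
  also have "\<dots> = (\<Sum>t\<in>h ` J. g t)"
  proof -
    have "inj_on h J"
    proof (rule inj_onI)
      fix j1 j2 assume j1: "j1 \<in> J" and j2: "j2 \<in> J" and e: "h j1 = h j2"
      have "list_decode j1 = list_decode j2"
      proof (rule nth_equalityI)
        show "length (list_decode j1) = length (list_decode j2)" using j1 j2 by (simp add: J_def)
        fix i assume "i < length (list_decode j1)"
        then have "i < m" using j1 by (simp add: J_def)
        then show "list_decode j1 ! i = list_decode j2 ! i" using fun_cong[OF e, of i] by (simp add: h_def)
      qed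
      then show "j1 = j2" by (simp add: list_decode_eq)
    qed
    then show ?thesis by (simp add: sum.reindex)
  qed
  also have "\<dots> \<le> (\<Sum>t\<in>PiE {..<m} (\<lambda>_. {..<N}). g t)"
  proof (rule sum_mono2)
    show "finite (PiE {..<m} (\<lambda>_. {..<N}))" by (simp add: finite_PiE)
    show "h ` J \<subseteq> PiE {..<m} (\<lambda>_. {..<N})"
    proof
      fix t assume "t \<in> h ` J"
      then obtain j where j: "j \<in> J" and t: "t = h j" by auto
      have "i < m \<Longrightarrow> list_decode j ! i < N" for i
        using j list_decode_bound[of "list_decode j ! i" j] by (auto simp: J_def)
      then show "t \<in> PiE {..<m} (\<lambda>_. {..<N})" by (auto simp: t h_def)
    qed
    show "\<And>b. b \<in> PiE {..<m} (\<lambda>_. {..<N}) - h ` J \<Longrightarrow> 0 \<le> g b"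
      by (auto simp: g_def intro: prod_nonneg)
  qed
  also have "\<dots> = (\<Prod>i<m. \<Sum>t<N. (xs i t)\<^sup>2)"
    unfolding g_def by (rule prod_sum_PiE[symmetric]) auto
  also have "\<dots> \<le> (\<Prod>i<m. \<Sum>t. (xs i t)\<^sup>2)"
  proof (rule prod_mono, rule conjI)
    fix i assume "i \<in> {..<m}"
    then have "xs i \<in> l2" using xs by auto
    then show "(\<Sum>t<N. (xs i t)\<^sup>2) \<le> (\<Sum>t. (xs i t)\<^sup>2)"
      by (intro sum_le_suminf) (auto simp: l2_def)
  qed (auto intro: sum_nonneg)
  finally show ?thesis .
qed

lemma Tm_props:
  assumes xs: "\<forall>i<m. xs i \<in> l2"
  shows "Tm m xs \<in> c0" "\<And>j. \<bar>Tm m xs j\<bar> \<le> (\<Prod>i<m. l2_norm (xs i))"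
    "c0_norm (Tm m xs) \<le> (\<Prod>i<m. l2_norm (xs i))"
proof -
  define P where "P = (\<Prod>i<m. \<Sum>t. (xs i t)\<^sup>2)"
  have sm: "summable (\<lambda>j. (Tm m xs j)\<^sup>2)"
    by (rule summableI_nonneg_bounded[where x = P]) (use Tm_partial[OF xs] in \<open>auto simp: P_def\<close>)
  have "(\<lambda>j. (Tm m xs j)\<^sup>2) \<longlonglongrightarrow> 0" using sm by (rule summable_LIMSEQ_zero)
  then have "(\<lambda>j. sqrt ((Tm m xs j)\<^sup>2)) \<longlonglongrightarrow> sqrt 0" by (rule tendsto_real_sqrt)
  then have "(\<lambda>j. \<bar>Tm m xs j\<bar>) \<longlonglongrightarrow> 0" by simp
  then show c: "Tm m xs \<in> c0" unfolding c0_def by (simp add: tendsto_rabs_zero_iff)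
  have P: "P = (\<Prod>i<m. l2_norm (xs i))\<^sup>2"
    unfolding P_def prod_power_distrib using xs by (intro prod.cong) (auto simp: l2_norm_sq)
  have N0: "0 \<le> (\<Prod>i<m. l2_norm (xs i))" using xs by (intro prod_nonneg l2_norm_nonneg) auto
  show b: "\<bar>Tm m xs j\<bar> \<le> (\<Prod>i<m. l2_norm (xs i))" for j
  proof -
    have "(\<Sum>t\<in>{j}. (Tm m xs t)\<^sup>2) \<le> (\<Sum>t. (Tm m xs t)\<^sup>2)"
      by (rule sum_le_suminf[OF sm]) auto
    also have "\<dots> \<le> P" by (rule suminf_le_const[OF sm]) (use Tm_partial[OF xs] in \<open>auto simp: P_def\<close>)
    finally have "\<bar>Tm m xs j\<bar>\<^sup>2 \<le> (\<Prod>i<m. l2_norm (xs i))\<^sup>2" using P by simp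
    then show ?thesis using N0 by (rule power2_le_imp_le)
  qed
  show "c0_norm (Tm m xs) \<le> (\<Prod>i<m. l2_norm (xs i))"
    unfolding c0_norm_def by (rule cSUP_least) (use b in auto)
qed

lemma Tm_upd:
  assumes i: "i < m"
  shows "Tm m (xs(i := y)) j = (if length (list_decode j) = m then
      y (list_decode j ! i) * (\<Prod>i'\<in>{..<m} - {i}. xs i' (list_decode j ! i')) else 0)"
proof -
  have "(\<Prod>i'<m. (xs(i := y)) i' (list_decode j ! i')) =
      (xs(i := y)) i (list_decode j ! i) * (\<Prod>i'\<in>{..<m} - {i}. (xs(i := y)) i' (list_decode j ! i'))"
    using i by (intro prod.remove) auto
  also have "(\<Prod>i'\<in>{..<m} - {i}. (xs(i := y)) i' (list_decode j ! i')) = (\<Prod>i'\<in>{..<m} - {i}. xs i' (list_decode j ! i'))"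
    by (intro prod.cong) auto
  finally show ?thesis by (simp add: Tm_def)
qed

lemma Tm_bml: "bounded_mlinear m l2 l2_norm c0 c0_norm (Tm m)"
  unfolding bounded_mlinear_def
proof (intro conjI ballI allI impI)
  fix xs assume "xs \<in> tuples m l2"
  then have xs: "\<forall>i<m. xs i \<in> l2" by (simp add: tuples_def)
  show "Tm m xs \<in> c0" using Tm_props(1)[OF xs] .
next
  fix i j xs assume i: "i < m"
  show "linear_on l2 (\<lambda>y. Tm m (xs(i := y)) j)"
    unfolding linear_on_def Tm_upd[OF i] by (auto simp: algebra_simps)
next
  show "\<exists>C. \<forall>xs\<in>tuples m l2. c0_norm (Tm m xs) \<le> C * (\<Prod>i<m. l2_norm (xs i))"
    by (rule exI[of _ 1]) (auto simp: tuples_def intro: Tm_props(3))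
qed

lemma Tm_ee:
  assumes k: "k \<in> PiE {..<m} (\<lambda>_. {..<n})"
  shows "1 \<le> c0_norm (Tm m (\<lambda>i. if i < m then ee (k i) else (\<lambda>_. 0)))"
proof -
  define xs where "xs = (\<lambda>i. if i < m then ee (k i) else (\<lambda>_. 0::real))"
  have xs: "\<forall>i<m. xs i \<in> l2" by (simp add: xs_def ee_l2)
  define j0 where "j0 = list_encode (map k [0..<m])"
  have "Tm m xs j0 = 1" by (simp add: Tm_def j0_def xs_def ee_def)
  then have "\<bar>Tm m xs j0\<bar> \<le> c0_norm (Tm m xs)" using c0_norm_ge Tm_props(1)[OF xs] by blast
  then show ?thesis using \<open>Tm m xs j0 = 1\<close> by (simp add: xs_def)
qed


lemma growth:
  fixes a s C :: real
  assumes C: "C \<ge> 0" and h: "\<And>n::nat. n \<ge> 1 \<Longrightarrow> real n powr a \<le> C * real n powr s"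
  shows "a \<le> s"
proof (rule ccontr)
  assume "\<not> a \<le> s"
  then have d: "a - s > 0" by simp
  define r where "r = (C + 1) powr (1 / (a - s))"
  have r0: "r > 0" using C by (simp add: r_def)
  define n where "n = nat \<lceil>r\<rceil> + 1"
  have n1: "n \<ge> 1" by (simp add: n_def)
  have rn: "r \<le> real n" unfolding n_def by linarith
  have "C + 1 = r powr (a - s)" using C d by (simp add: r_def powr_powr)
  also have "\<dots> \<le> real n powr (a - s)" using rn r0 d by (intro powr_mono2) auto
  finally have A: "C + 1 \<le> real n powr (a - s)" .
  have npos: "real n > 0" using n1 by simp
  have "real n powr a = real n powr (a - s) * real n powr s" by (simp add: powr_add[symmetric])
  also have "\<dots> \<ge> (C + 1) * real n powr s" using A by (intro mult_right_mono) auto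
  finally have "(C + 1) * real n powr s \<le> C * real n powr s" using h[OF n1] by linarith
  then show False using npos by (simp add: algebra_simps)
qed

theorem mainTheorem3:
  fixes m :: nat
  shows "eta_mult m 2 2 l2 l2_norm c0 c0_norm = real m / 2"
  unfolding eta_mult_def
proof (rule cInf_eq_minimum)
  show "real m / 2 \<in> {s. \<forall>T. bounded_mlinear m l2 l2_norm c0 c0_norm T \<longrightarrow>
       (\<exists>C\<ge>0. \<forall>n::nat. n \<ge> 1 \<longrightarrow>
          (\<forall>x :: nat \<Rightarrow> nat \<Rightarrow> nat \<Rightarrow> real. (\<forall>i<m. \<forall>k<n. x i k \<in> l2) \<longrightarrow>
             (\<Sum>k\<in>PiE {..<m} (\<lambda>_. {..<n}). c0_norm (T (\<lambda>i. if i < m then x i (k i) else (\<lambda>_. 0))) powr 2) powr (1/2)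
               \<le> C * real n powr s * (\<Prod>i<m. weak_norm l2 l2_norm 2 n (x i))))}"
    using upper_bound by auto
next
  fix s assume "s \<in> {s. \<forall>T. bounded_mlinear m l2 l2_norm c0 c0_norm T \<longrightarrow>
       (\<exists>C\<ge>0. \<forall>n::nat. n \<ge> 1 \<longrightarrow>
          (\<forall>x :: nat \<Rightarrow> nat \<Rightarrow> nat \<Rightarrow> real. (\<forall>i<m. \<forall>k<n. x i k \<in> l2) \<longrightarrow>
             (\<Sum>k\<in>PiE {..<m} (\<lambda>_. {..<n}). c0_norm (T (\<lambda>i. if i < m then x i (k i) else (\<lambda>_. 0))) powr 2) powr (1/2)
               \<le> C * real n powr s * (\<Prod>i<m. weak_norm l2 l2_norm 2 n (x i))))}"
  then obtain C where C: "C \<ge> 0" and H: "\<And>n::nat. n \<ge> 1 \<Longrightarrow>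
          (\<forall>x :: nat \<Rightarrow> nat \<Rightarrow> nat \<Rightarrow> real. (\<forall>i<m. \<forall>k<n. x i k \<in> l2) \<longrightarrow>
             (\<Sum>k\<in>PiE {..<m} (\<lambda>_. {..<n}). c0_norm (Tm m (\<lambda>i. if i < m then x i (k i) else (\<lambda>_. 0))) powr 2) powr (1/2)
               \<le> C * real n powr s * (\<Prod>i<m. weak_norm l2 l2_norm 2 n (x i)))"
    using Tm_bml by blast
  show "real m / 2 \<le> s"
  proof (rule growth[OF C])
    fix n :: nat assume n: "n \<ge> 1"
    have H1: "(\<Sum>k\<in>PiE {..<m} (\<lambda>_. {..<n}). c0_norm (Tm m (\<lambda>i. if i < m then ee (k i) else (\<lambda>_. 0))) powr 2) powr (1/2)
               \<le> C * real n powr s * (\<Prod>i<m. weak_norm l2 l2_norm 2 n (\<lambda>k. ee k))"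
      using H[OF n, rule_format, of "\<lambda>i k. ee k"] by (simp add: ee_l2)
    have "real n ^ m = (\<Sum>k\<in>PiE {..<m} (\<lambda>_. {..<n}). 1)" by (simp add: card_PiE)
    also have "\<dots> \<le> (\<Sum>k\<in>PiE {..<m} (\<lambda>_. {..<n}). c0_norm (Tm m (\<lambda>i. if i < m then ee (k i) else (\<lambda>_. 0))) powr 2)"
    proof (rule sum_mono)
      fix k assume k: "k \<in> PiE {..<m} (\<lambda>_. {..<n})"
      have "1 \<le> c0_norm (Tm m (\<lambda>i. if i < m then ee (k i) else (\<lambda>_. 0)))" by (rule Tm_ee[OF k])
      then show "1 \<le> c0_norm (Tm m (\<lambda>i. if i < m then ee (k i) else (\<lambda>_. 0))) powr 2"
      proof -
        let ?c = "c0_norm (Tm m (\<lambda>i. if i < m then ee (k i) else (\<lambda>_. 0)))"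
        have "?c powr 2 = ?c\<^sup>2" using abs_powr2[of ?c] \<open>1 \<le> ?c\<close> by simp
        moreover have "1 \<le> ?c\<^sup>2" using \<open>1 \<le> ?c\<close> by (simp add: one_le_power)
        ultimately show ?thesis by simp
      qed
    qed
    finally have S: "real n ^ m \<le> (\<Sum>k\<in>PiE {..<m} (\<lambda>_. {..<n}). c0_norm (Tm m (\<lambda>i. if i < m then ee (k i) else (\<lambda>_. 0))) powr 2)" .
    have "real n powr (real m / 2) = (real n ^ m) powr (1/2)"
      using n by (simp add: powr_half_sqrt_powr powr_realpow powr_half_sqrt)
    also have "\<dots> \<le> (\<Sum>k\<in>PiE {..<m} (\<lambda>_. {..<n}). c0_norm (Tm m (\<lambda>i. if i < m then ee (k i) else (\<lambda>_. 0))) powr 2) powr (1/2)"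
      using S by (intro powr_mono2) auto
    also have "\<dots> \<le> C * real n powr s * (\<Prod>i<m. weak_norm l2 l2_norm 2 n (\<lambda>k. ee k))" by (rule H1)
    also have "\<dots> \<le> C * real n powr s * 1"
    proof (intro mult_left_mono prod_le_1 conjI)
      show "0 \<le> C * real n powr s" using C by simp
      fix i show "0 \<le> weak_norm l2 l2_norm 2 n (\<lambda>k. ee k)" by (rule wn_nonneg) (simp add: ee_l2)
      show "weak_norm l2 l2_norm 2 n (\<lambda>k. ee k) \<le> 1" by (rule wn_ee)
    qed
    finally show "real n powr (real m / 2) \<le> C * real n powr s" by simp
  qed
qed

end
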